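(* Assume (H1), (H2)(i) and (H2)(ii) described in the context, and set $l:=h+k$. Then for every $\sigma>0$ there is a constant $C_\sigma>0$ such that $$|H(x,s,t)|\le l(x)\big[\sigma(\Phi(s)+\Psi(t))+C_\sigma\big]\quad\text{for all }(x,s,t)\in\mathbb{R}^N\times(0,+\infty)^2.$$
   Context: Notation: $N\ge2$, $\mathbb{R}_+=(0,+\infty)$. A Young function is a convex $\Lambda:[0,\infty)\to[0,\infty)$ with $\Lambda(t)=0$ iff $t=0$, $\lim_{t\to0^+}\Lambda(t)/t=0$, $\lim_{t\to\infty}\Lambda(t)/t=\infty$; $\overline{\Lambda}(t)=\max_{s\ge0}\{st-\Lambda(s)\}$; for differentiable $\Lambda$, $s_\Lambda=\sup_{t>0}t\Lambda'(t)/\Lambda(t)$. $\Lambda_1\ll\Lambda_2$ means $\lim_{t\to\infty}\Lambda_1(t)/\Lambda_2(\eta t)=0$ for every $\eta>0$. Setting: $\Phi,\Psi$ Young functions, $\phi=\Phi'$, $\psi=\Psi'$; $f,g:\mathbb{R}_+\times\mathbb{R}_+\to\mathbb{R}_+$ continuous; $h,k:\mathbb{R}^N\to\mathbb{R}_+$ measurable. (H1) $\Phi,\Psi$ are $C^2$, $0<\inf_{t>0}\frac{t\phi'(t)}{\phi(t)}\le\sup_{t>0}\frac{t\phi'(t)}{\phi(t)}<\infty$, the same for $\psi$, and $\max\{s_\Phi,s_\Psi\}<N$. (H2)(i) $H:\mathbb{R}^N\times\mathbb{R}_+\times\mathbb{R}_+\to\mathbb{R}$ is measurable in $x$, $C^1$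 in $(s,t)$, with $\partial_sH(x,s,t)=h(x)f(s,t)$, $\partial_tH(x,s,t)=k(x)g(s,t)$, $H(\cdot,0,0)\equiv0$. (H2)(ii) There are differentiable Young functions $\Upsilon_1,\Upsilon_2,\Gamma_1,\Gamma_2$ with $\Upsilon_1\ll\Phi$, $\Gamma_2\ll\Psi$, constants $C>0$, $\alpha,\beta\in(0,1)$ such that for all $s,t>0$: $f(s,t)\le C[(s^{-\alpha}+1)(\Upsilon_2(t)/t+1)+\Upsilon_1(s)/s]$, $g(s,t)\le C[(t^{-\beta}+1)(\Gamma_1(s)/s+1)+\Gamma_2(t)/t]$; and $\overline{\Phi}\ll\Psi\circ\Upsilon_2^{-1}\circ\overline{\Upsilon}_2$, $\overline{\Psi}\ll\Phi\circ\Gamma_1^{-1}\circ\overline{\Gamma}_1$. *)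

theory Defs
  imports "HOL-Analysis.Analysis"
begin

text \<open>Young function (only its values on [0,infinity) matter).\<close>
definition young :: "(real \<Rightarrow> real) \<Rightarrow> bool" where
  "young \<Lambda> \<longleftrightarrow>
     convex_on {0..} \<Lambda> \<and>
     (\<forall>t\<ge>0. \<Lambda> t \<ge> 0) \<and>
     (\<forall>t\<ge>0. \<Lambda> t = 0 \<longleftrightarrow> t = 0) \<and>
     ((\<lambda>t. \<Lambda> t / t) \<longlongrightarrow> 0) (at_right 0) \<and>
     filterlim (\<lambda>t. \<Lambda> t / t) at_top at_top"

definition young_conj :: "(real \<Rightarrow> real) \<Rightarrow> real \<Rightarrow> real" where
  "young_conj \<Lambda> t = (SUP s\<in>{0..}. s * t - \<Lambda> s)"

definition young_inv :: "(real \<Rightarrow> real) \<Rightarrow> real \<Rightarrow> real" where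
  "young_inv \<Lambda> y = (THE t. 0 \<le> t \<and> \<Lambda> t = y)"

definition s_index :: "(real \<Rightarrow> real) \<Rightarrow> real" where
  "s_index \<Lambda> = (SUP t\<in>{0<..}. t * deriv \<Lambda> t / \<Lambda> t)"

definition ll :: "(real \<Rightarrow> real) \<Rightarrow> (real \<Rightarrow> real) \<Rightarrow> bool" where
  "ll \<Lambda>1 \<Lambda>2 \<longleftrightarrow> (\<forall>\<eta>>0. ((\<lambda>t. \<Lambda>1 t / \<Lambda>2 (\<eta> * t)) \<longlongrightarrow> 0) at_top)"

definition C2_pos :: "(real \<Rightarrow> real) \<Rightarrow> (real \<Rightarrow> real) \<Rightarrow> bool" where
  "C2_pos \<Lambda> lam \<longleftrightarrow>
     (\<forall>t>0. (\<Lambda> has_real_derivative lam t) (at t)) \<and>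
     (\<exists>lam'. (\<forall>t>0. (lam has_real_derivative lam' t) (at t)) \<and> continuous_on {0<..} lam')"

definition index_bounds :: "(real \<Rightarrow> real) \<Rightarrow> bool" where
  "index_bounds lam \<longleftrightarrow>
     (\<exists>a b. 0 < a \<and> (\<forall>t>0. a \<le> t * deriv lam t / lam t \<and> t * deriv lam t / lam t \<le> b))"

end

theory Submission
  imports Defs
begin

lemma cmp_deriv:
  fixes F G F' G' :: "real \<Rightarrow> real"
  assumes "a \<le> b"
    and "\<And>x. a \<le> x \<Longrightarrow> x \<le> b \<Longrightarrow> (F has_real_derivative F' x) (at x)"
    and "\<And>x. a \<le> x \<Longrightarrow> x \<le> b \<Longrightarrow> (G has_real_derivative G' x) (at x)"
    and "\<And>x. a \<le> x \<Longrightarrow> x \<le> b \<Longrightarrow> F' x \<le> G' x"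
  shows "F b - F a \<le> G b - G a"
proof -
  have "(\<lambda>x. G x - F x) a \<le> (\<lambda>x. G x - F x) b"
  proof (rule DERIV_nonneg_imp_increasing_open[OF assms(1)])
    fix x assume "a < x" "x < b"
    then show "\<exists>y. ((\<lambda>x. G x - F x) has_real_derivative y) (at x) \<and> 0 \<le> y"
      using assms by (intro exI[of _ "G' x - F' x"]) (auto intro!: DERIV_diff)
  next
    have "\<forall>x\<in>{a..b}. isCont (\<lambda>x. G x - F x) x"
    proof
      fix x assume "x \<in> {a..b}"
      then have "isCont G x" "isCont F x" using assms(2,3) DERIV_isCont by (auto, blast, blast)
      then show "isCont (\<lambda>x. G x - F x) x" by (intro continuous_intros)
    qed
    then show "continuous_on {a..b} (\<lambda>x. G x - F x)"
      by (rule continuous_at_imp_continuous_on)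
  qed
  then show ?thesis by simp
qed

lemma young_0: "young L \<Longrightarrow> L 0 = 0"
  unfolding young_def by auto

lemma young_nonneg: "young L \<Longrightarrow> 0 \<le> x \<Longrightarrow> 0 \<le> L x"
  unfolding young_def by auto

lemma young_pos: "young L \<Longrightarrow> 0 < x \<Longrightarrow> 0 < L x"
  unfolding young_def by (metis less_eq_real_def)

lemma young_scale:
  assumes "young L" "0 \<le> e" "e \<le> 1" "0 \<le> y"
  shows "L (e * y) \<le> e * L y"
proof -
  have cv: "convex_on {0..} L" using assms(1) unfolding young_def by auto
  have "L ((1 - e) *\<^sub>R 0 + e *\<^sub>R y) \<le> (1 - e) * L 0 + e * L y"
    by (rule convex_onD[OF cv]) (use assms in auto)
  then show ?thesis using young_0[OF assms(1)] by simp
qed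

lemma young_ratio_mono:
  assumes "young L" "0 < x" "x \<le> y"
  shows "L x / x \<le> L y / y"
proof -
  have "L ((x / y) * y) \<le> (x / y) * L y"
    by (rule young_scale) (use assms in auto)
  then have "L x \<le> (x / y) * L y" using assms by simp
  then show ?thesis using assms by (simp add: field_simps)
qed

lemma young_mono:
  assumes "young L" "0 \<le> x" "x \<le> y"
  shows "L x \<le> L y"
proof (cases "y = 0")
  case True then show ?thesis using assms by auto
next
  case False
  then have "L ((x / y) * y) \<le> (x / y) * L y"
    by (intro young_scale) (use assms in auto)
  also have "\<dots> \<le> L y" using young_nonneg[OF assms(1), of y] assms False
    by (intro mult_left_le_one_le) auto
  finally show ?thesis using False by simp
qed

lemma young_strict:
  assumes "young L" "0 \<le> x" "x < y"
  shows "L x < L y"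
proof -
  have "L ((x / y) * y) \<le> (x / y) * L y"
    by (intro young_scale) (use assms in auto)
  also have "\<dots> < L y" using young_pos[OF assms(1), of y] assms
    by (auto simp: field_simps)
  finally show ?thesis using assms by simp
qed

lemma young_lin:
  assumes "young L" "\<sigma> > 0"
  shows "\<exists>K. \<forall>s>0. s \<le> \<sigma> * L s + K"
proof -
  have "filterlim (\<lambda>t. L t / t) at_top at_top" using assms(1) unfolding young_def by auto
  then have "eventually (\<lambda>t. 1 / \<sigma> \<le> L t / t) at_top" by (simp add: filterlim_at_top)
  then obtain M where M: "\<And>t. t \<ge> M \<Longrightarrow> 1 / \<sigma> \<le> L t / t" by (auto simp: eventually_at_top_linorder)
  show ?thesis
  proof (intro exI allI impI)
    fix s :: real assume s: "s > 0"
    show "s \<le> \<sigma> * L s + max M 1"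
    proof (cases "s \<ge> max M 1")
      case True
      then have "1 / \<sigma> \<le> L s / s" using M by auto
      then have "s \<le> \<sigma> * L s" using s assms(2) by (simp add: field_simps)
      then show ?thesis by simp
    next
      case False
      have "0 \<le> \<sigma> * L s" using young_nonneg[OF assms(1), of s] s assms(2) by simp
      then show ?thesis using False by linarith
    qed
  qed
qed

lemma young_ll:
  assumes "young U" "young L" "ll U L" "\<sigma> > 0"
  shows "\<exists>K. \<forall>s>0. U s \<le> \<sigma> * L s + K"
proof -
  have "((\<lambda>t. U t / L (1 * t)) \<longlongrightarrow> 0) at_top" using assms(3)[unfolded ll_def, rule_format, of 1] by simp
  then have "eventually (\<lambda>t. U t / L t < \<sigma>) at_top" using assms(4) unfolding mult_1
    by (simp add: order_tendstoD(2))
  then obtain M where M: "\<And>t. t \<ge> M \<Longrightarrow> U t / L t < \<sigma>" by (auto simp: eventually_at_top_linorder)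
  show ?thesis
  proof (intro exI allI impI)
    fix s :: real assume s: "s > 0"
    show "U s \<le> \<sigma> * L s + U (max M 1)"
    proof (cases "s \<ge> max M 1")
      case True
      then have "U s / L s < \<sigma>" using M by auto
      moreover have "L s > 0" using young_pos[OF assms(2) s] .
      ultimately have "U s \<le> \<sigma> * L s" by (simp add: field_simps)
      moreover have "0 \<le> U (max M 1)" using young_nonneg[OF assms(1), of "max M 1"] by simp
      ultimately show ?thesis by linarith
    next
      case False
      then have "U s \<le> U (max M 1)" using young_mono[OF assms(1), of s "max M 1"] s by auto
      moreover have "0 \<le> \<sigma> * L s" using young_nonneg[OF assms(2), of s] s assms(4) by simp
      ultimately show ?thesis by linarith
    qed
  qed
qed

lemma young_small_ratio:
  assumes "young L" "a > 0" "y > 0"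
  shows "\<exists>r>0. r < y \<and> L r / r < a"
proof -
  have "((\<lambda>t. L t / t) \<longlongrightarrow> 0) (at_right 0)" using assms(1) unfolding young_def by auto
  then have "eventually (\<lambda>t. L t / t < a) (at_right 0)" using assms(2) by (simp add: order_tendstoD(2))
  moreover have "eventually (\<lambda>t. t < y) (at_right (0::real))"
    using assms(3) eventually_at_right_field by blast
  moreover have "eventually (\<lambda>t. t > 0) (at_right (0::real))" by (rule eventually_at_right_less)
  ultimately have "eventually (\<lambda>t. t > 0 \<and> t < y \<and> L t / t < a) (at_right 0)"
    by eventually_elim auto
  then show ?thesis using eventually_happens'[OF trivial_limit_at_right_real[of 0]] by blast
qed

lemma young_cont:
  assumes "young L" shows "continuous_on {0<..} L"
proof -
  have "convex_on {0..} L" using assms unfolding young_def by auto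
  then have "convex_on {0<..} L" by (rule convex_on_subset) (auto simp: convex_real_interval)
  then show ?thesis by (intro convex_on_continuous) (auto simp: open_greaterThan)
qed

lemma young_surj:
  assumes "young L" "y > 0"
  shows "\<exists>t>0. L t = y"
proof -
  have "\<exists>r>0. r < y \<and> L r / r < 1" by (rule young_small_ratio[OF assms(1) zero_less_one assms(2)])
  then obtain r where r: "r > 0" "r < y" "L r / r < 1" by blast
  then have "L r < r" by (simp add: divide_less_eq)
  then have Lr: "L r < y" using r(2) by linarith
  obtain K where K0: "\<forall>s>0. s \<le> 1 * L s + K" using young_lin[OF assms(1) zero_less_one] by blast
  note K = K0[rule_format]
  define T where "T = max r (y + K)"
  have Tr: "r \<le> T" "y + K \<le> T" unfolding T_def by simp_all
  have "T \<le> 1 * L T + K" using K[of T] r(1) Tr(1) by linarith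
  then have LT: "y \<le> L T" using Tr(2) by linarith
  have "{r..T} \<subseteq> {0<..}" using r(1) by auto
  then have "continuous_on {r..T} L"
    by (rule continuous_on_subset[OF young_cont[OF assms(1)]])
  then obtain t where "t \<ge> r" "t \<le> T" "L t = y" using IVT'[of L r y T] Lr LT Tr(1) by auto
  then show ?thesis using r(1) by (intro exI[of _ t]) simp
qed

lemma young_inv_prop:
  assumes "young L" "0 \<le> y"
  shows "0 \<le> young_inv L y \<and> L (young_inv L y) = y"
proof -
  have ex: "\<exists>t. 0 \<le> t \<and> L t = y"
  proof (cases "y = 0")
    case True then show ?thesis using young_0[OF assms(1)] by auto
  next
    case False
    then obtain t where "t > 0" "L t = y" using young_surj[OF assms(1), of y] assms(2) by auto
    then show ?thesis by (intro exI[of _ t]) simp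
  qed
  have "\<exists>!t. 0 \<le> t \<and> L t = y"
  proof (rule ex_ex1I[OF ex])
    fix t1 t2 assume "0 \<le> t1 \<and> L t1 = y" "0 \<le> t2 \<and> L t2 = y"
    then show "t1 = t2" using young_strict[OF assms(1), of t1 t2] young_strict[OF assms(1), of t2 t1]
      by (cases t1 t2 rule: linorder_cases) auto
  qed
  then show ?thesis unfolding young_inv_def by (rule theI')
qed

lemma young_inv_le:
  assumes "young L" "0 \<le> y" "y \<le> L s" "0 \<le> s"
  shows "young_inv L y \<le> s"
proof (rule ccontr)
  assume "\<not> ?thesis"
  then have "s < young_inv L y" by simp
  then have "L s < L (young_inv L y)" using young_strict[OF assms(1)] assms(4) by blast
  then show False using young_inv_prop[OF assms(1,2)] assms(3) by simp
qed

lemma young_inv_pos: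
  assumes "young L" "0 < y"
  shows "0 < young_inv L y"
proof -
  have "young_inv L y \<noteq> 0" using young_inv_prop[OF assms(1), of y] young_0[OF assms(1)] assms by auto
  then show ?thesis using young_inv_prop[OF assms(1), of y] assms by auto
qed

lemma conj_bdd:
  assumes "young L"
  shows "bdd_above ((\<lambda>s. s * u - L s) ` {0..})"
proof -
  define c where "c = \<bar>u\<bar> + 1"
  have c: "c > 0" unfolding c_def by simp
  obtain K where K0: "\<forall>s>0. s \<le> (1 / c) * L s + K" using young_lin[OF assms(1)] c by (meson divide_pos_pos zero_less_one)
  show ?thesis unfolding bdd_above_def
  proof (intro exI ballI)
    fix z assume "z \<in> (\<lambda>s. s * u - L s) ` {0..}"
    then obtain s where s: "s \<ge> 0" "z = s * u - L s" by auto
    show "z \<le> max 0 (c * K)"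
    proof (cases "s = 0")
      case True then show ?thesis using s young_0[OF assms(1)] by simp
    next
      case False
      then have "s \<le> (1 / c) * L s + K" using K0 s(1) by simp
      then have "c * s \<le> L s + c * K" using c by (simp add: field_simps)
      moreover have "s * u \<le> s * \<bar>u\<bar>" using s(1) by (simp add: mult_left_mono)
      moreover have "c * s = s * \<bar>u\<bar> + s" unfolding c_def by (simp add: algebra_simps)
      ultimately have "z \<le> c * K" using s by linarith
      then show ?thesis by linarith
    qed
  qed
qed

lemma conj_upper:
  assumes "young L" "0 \<le> r"
  shows "r * u - L r \<le> young_conj L u"
  unfolding young_conj_def
  by (rule cSUP_upper[OF _ conj_bdd[OF assms(1)]]) (use assms(2) in simp)

lemma conj_least:
  assumes "\<And>r. 0 \<le> r \<Longrightarrow> r * u - L r \<le> M"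
  shows "young_conj L u \<le> M"
  unfolding young_conj_def
  by (rule cSUP_least) (use assms in auto)

lemma conj_mono:
  assumes "young L" "u \<le> v"
  shows "young_conj L u \<le> young_conj L v"
proof (rule conj_least)
  fix r :: real assume r: "0 \<le> r"
  have "r * u \<le> r * v" using r assms(2) by (simp add: mult_left_mono)
  then show "r * u - L r \<le> young_conj L v" using conj_upper[OF assms(1) r, of v] by linarith
qed

lemma conj_le:
  assumes "young L" "s > 0"
  shows "young_conj L (L s / s) \<le> L s"
proof (rule conj_least)
  fix r :: real assume r: "0 \<le> r"
  have Ls: "0 \<le> L s" using young_nonneg[OF assms(1)] assms(2) by simp
  show "r * (L s / s) - L r \<le> L s"
  proof (cases "r \<le> s")
    case True
    have "r * (L s / s) \<le> s * (L s / s)" using True Ls assms(2) by (intro mult_right_mono) auto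
    also have "\<dots> = L s" using assms(2) by simp
    finally show ?thesis using young_nonneg[OF assms(1) r] by linarith
  next
    case False
    then have "L s / s \<le> L r / r" using young_ratio_mono[OF assms(1) assms(2)] by simp
    then have "r * (L s / s) \<le> r * (L r / r)" using r by (rule mult_left_mono)
    also have "\<dots> = L r" using False assms(2) by simp
    finally show ?thesis using Ls by linarith
  qed
qed

lemma conj_pos:
  assumes "young L" "a > 0"
  shows "young_conj L a > 0"
proof -
  obtain r where r: "r > 0" "r < 1" "L r / r < a" using young_small_ratio[OF assms(1) assms(2) zero_less_one] by blast
  then have "L r < r * a" by (simp add: divide_less_eq mult.commute)
  then have "0 < r * a - L r" by simp
  also have "\<dots> \<le> young_conj L a" using conj_upper[OF assms(1)] r(1) by simp
  finally show ?thesis .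
qed

lemma conj_nonneg:
  assumes "young L"
  shows "young_conj L a \<ge> 0"
  using conj_upper[OF assms(1), of 0 a] young_0[OF assms(1)] by simp

lemma prod_bound:
  assumes yPhi: "young Phi" and yPsi: "young Psi" and yG: "young G"
    and llc: "ll (young_conj Psi) (Phi \<circ> young_inv G \<circ> young_conj G)" and sg: "\<sigma> > 0"
  shows "\<exists>K. \<forall>s>0. \<forall>t>0. (G s / s) * t \<le> \<sigma> * (Phi s + Psi t) + K"
proof -
  define e where "e = min \<sigma> 1"
  have e: "e > 0" "e \<le> 1" "e \<le> \<sigma>" unfolding e_def using sg by auto
  have "((\<lambda>u. young_conj Psi u / (Phi \<circ> young_inv G \<circ> young_conj G) (e * u)) \<longlongrightarrow> 0) at_top"
    using llc[unfolded ll_def, rule_format, OF e(1)] .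
  then have "eventually (\<lambda>u. young_conj Psi u / (Phi \<circ> young_inv G \<circ> young_conj G) (e * u) < e) at_top"
    using e(1) by (rule order_tendstoD(2))
  then obtain M where M: "\<And>u. u \<ge> M \<Longrightarrow> young_conj Psi u / (Phi \<circ> young_inv G \<circ> young_conj G) (e * u) < e"
    by (auto simp: eventually_at_top_linorder)
  define M' where "M' = max M 1"
  define K where "K = young_conj Psi M'"
  have K0: "K \<ge> 0" unfolding K_def by (rule conj_nonneg[OF yPsi])
  show ?thesis
  proof (intro exI allI impI)
    fix s t :: real assume s: "s > 0" and t: "t > 0"
    define a where "a = G s / s"
    have a: "a > 0" unfolding a_def using young_pos[OF yG s] s by simp
    define u where "u = a / e"
    have eu: "e * u = a" unfolding u_def using e(1) by simp
    have et: "0 \<le> e * t" using e(1) t by simp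
    have st1: "(e * t) * u - Psi (e * t) \<le> young_conj Psi u" by (rule conj_upper[OF yPsi et])
    have "(e * t) * u = a * t" using eu by (simp add: algebra_simps)
    have st2: "Psi (e * t) \<le> e * Psi t" by (rule young_scale[OF yPsi]) (use e t in auto)
    have "e * Psi t \<le> \<sigma> * Psi t" using e(3) young_nonneg[OF yPsi, of t] t by (intro mult_right_mono) auto
    have Phis: "0 \<le> \<sigma> * Phi s" using young_nonneg[OF yPhi, of s] s sg by simp
    have st3: "young_conj Psi u \<le> \<sigma> * Phi s + K"
    proof (cases "u \<ge> M'")
      case True
      then have r: "young_conj Psi u / (Phi \<circ> young_inv G \<circ> young_conj G) (e * u) < e"
        using M unfolding M'_def by auto
      define cg where "cg = young_conj G a"
      have cg: "0 < cg" "cg \<le> G s" unfolding cg_def a_def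
        using conj_pos[OF yG a[unfolded a_def]] conj_le[OF yG s] by auto
      define iv where "iv = young_inv G cg"
      have iv: "0 < iv" "iv \<le> s" unfolding iv_def
        using young_inv_pos[OF yG cg(1)] young_inv_le[OF yG _ cg(2)] cg(1) s by auto
      define D where "D = Phi iv"
      have D: "0 < D" "D \<le> Phi s" unfolding D_def
        using young_pos[OF yPhi iv(1)] young_mono[OF yPhi _ iv(2)] iv(1) by auto
      have "(Phi \<circ> young_inv G \<circ> young_conj G) (e * u) = D"
        unfolding eu D_def iv_def cg_def by simp
      with r have "young_conj Psi u / D < e" by simp
      then have "young_conj Psi u < e * D" using D(1) by (simp add: divide_less_eq)
      also have "\<dots> \<le> \<sigma> * Phi s" using e D by (intro mult_mono) auto
      finally show ?thesis using K0 by linarith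
    next
      case False
      then have "young_conj Psi u \<le> K" unfolding K_def by (intro conj_mono[OF yPsi]) simp
      then show ?thesis using Phis by linarith
    qed
    show "G s / s * t \<le> \<sigma> * (Phi s + Psi t) + K"
      unfolding a_def[symmetric] using st1 st2 st3 \<open>(e * t) * u = a * t\<close> \<open>e * Psi t \<le> \<sigma> * Psi t\<close>
      by (simp only: distrib_left)
  qed
qed

definition small :: "(real \<Rightarrow> real) \<Rightarrow> (real \<Rightarrow> real) \<Rightarrow> (real \<Rightarrow> real \<Rightarrow> real) \<Rightarrow> bool" where
  "small P Q X \<longleftrightarrow> (\<forall>\<sigma>>0. \<exists>K. \<forall>s>0. \<forall>t>0. X s t \<le> \<sigma> * (P s + Q t) + K)"

lemma smallI: "(\<And>\<sigma>. \<sigma> > 0 \<Longrightarrow> \<exists>K. \<forall>s>0. \<forall>t>0. X s t \<le> \<sigma> * (P s + Q t) + K) \<Longrightarrow> small P Q X"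
  unfolding small_def by blast

lemma smallD: "small P Q X \<Longrightarrow> \<sigma> > 0 \<Longrightarrow> \<exists>K. \<forall>s>0. \<forall>t>0. X s t \<le> \<sigma> * (P s + Q t) + K"
  unfolding small_def by blast

lemma small_add:
  assumes "small P Q X" "small P Q Y"
  shows "small P Q (\<lambda>s t. X s t + Y s t)"
proof (rule smallI)
  fix \<sigma> :: real assume sg: "\<sigma> > 0"
  obtain K1 where K1: "\<forall>s>0. \<forall>t>0. X s t \<le> (\<sigma>/2) * (P s + Q t) + K1" using smallD[OF assms(1), of "\<sigma>/2"] sg by auto
  obtain K2 where K2: "\<forall>s>0. \<forall>t>0. Y s t \<le> (\<sigma>/2) * (P s + Q t) + K2" using smallD[OF assms(2), of "\<sigma>/2"] sg by auto
  show "\<exists>K. \<forall>s>0. \<forall>t>0. X s t + Y s t \<le> \<sigma> * (P s + Q t) + K"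
  proof (intro exI allI impI)
    fix s t :: real assume "s > 0" "t > 0"
    then have "X s t \<le> (\<sigma>/2) * (P s + Q t) + K1" "Y s t \<le> (\<sigma>/2) * (P s + Q t) + K2" using K1 K2 by auto
    then show "X s t + Y s t \<le> \<sigma> * (P s + Q t) + (K1 + K2)" by (simp add: field_simps)
  qed
qed

lemma small_cmult:
  assumes "small P Q X" "c > 0"
  shows "small P Q (\<lambda>s t. c * X s t)"
proof (rule smallI)
  note c = assms(2)
  fix \<sigma> :: real assume sg: "\<sigma> > 0"
  obtain K where K: "\<forall>s>0. \<forall>t>0. X s t \<le> (\<sigma>/c) * (P s + Q t) + K" using smallD[OF assms(1), of "\<sigma>/c"] sg c by auto
  show "\<exists>K. \<forall>s>0. \<forall>t>0. c * X s t \<le> \<sigma> * (P s + Q t) + K"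
  proof (intro exI allI impI)
    fix s t :: real assume "s > 0" "t > 0"
    then have "X s t \<le> (\<sigma>/c) * (P s + Q t) + K" using K by auto
    then have "c * X s t \<le> c * ((\<sigma>/c) * (P s + Q t) + K)" using c by (simp add: mult_left_mono)
    moreover have "c * ((\<sigma>/c) * (P s + Q t) + K) = \<sigma> * (P s + Q t) + c * K" using c by (simp add: field_simps)
    ultimately show "c * X s t \<le> \<sigma> * (P s + Q t) + c * K" by linarith
  qed
qed

lemma small_le:
  assumes "small P Q X" "\<And>s t. s > 0 \<Longrightarrow> t > 0 \<Longrightarrow> Y s t \<le> X s t"
  shows "small P Q Y"
proof (rule smallI)
  fix \<sigma> :: real assume sg: "\<sigma> > 0"
  obtain K where K: "\<forall>s>0. \<forall>t>0. X s t \<le> \<sigma> * (P s + Q t) + K" using smallD[OF assms(1) sg] by auto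
  show "\<exists>K. \<forall>s>0. \<forall>t>0. Y s t \<le> \<sigma> * (P s + Q t) + K"
    using K assms(2) by (meson order_trans)
qed

lemma small_const:
  assumes "young P" "young Q"
  shows "small P Q (\<lambda>s t. c)"
proof (rule smallI)
  fix \<sigma> :: real assume sg: "\<sigma> > 0"
  show "\<exists>K. \<forall>s>0. \<forall>t>0. c \<le> \<sigma> * (P s + Q t) + K"
  proof (intro exI allI impI)
    fix s t :: real assume "s > 0" "t > 0"
    then have "0 \<le> P s + Q t" using young_nonneg[OF assms(1), of s] young_nonneg[OF assms(2), of t] by simp
    then show "c \<le> \<sigma> * (P s + Q t) + c" using sg by simp
  qed
qed

lemma small_s_gen:
  assumes "young P" "young Q" "\<And>\<sigma>. \<sigma> > 0 \<Longrightarrow> \<exists>K. \<forall>s>0. F s \<le> \<sigma> * P s + K"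
  shows "small P Q (\<lambda>s t. F s)"
proof (rule smallI)
  fix \<sigma> :: real assume sg: "\<sigma> > 0"
  obtain K where K: "\<forall>s>0. F s \<le> \<sigma> * P s + K" using assms(3) sg by blast
  show "\<exists>K. \<forall>s>0. \<forall>t>0. F s \<le> \<sigma> * (P s + Q t) + K"
  proof (intro exI allI impI)
    fix s t :: real assume "s > 0" "t > 0"
    then have "0 \<le> \<sigma> * Q t" using young_nonneg[OF assms(2), of t] sg by simp
    moreover have "F s \<le> \<sigma> * P s + K" using K \<open>s > 0\<close> by blast
    ultimately show "F s \<le> \<sigma> * (P s + Q t) + K" by (simp add: distrib_left)
  qed
qed

lemma small_t_gen:
  assumes "young P" "young Q" "\<And>\<sigma>. \<sigma> > 0 \<Longrightarrow> \<exists>K. \<forall>t>0. F t \<le> \<sigma> * Q t + K"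
  shows "small P Q (\<lambda>s t. F t)"
proof (rule smallI)
  fix \<sigma> :: real assume sg: "\<sigma> > 0"
  obtain K where K: "\<forall>t>0. F t \<le> \<sigma> * Q t + K" using assms(3) sg by blast
  show "\<exists>K. \<forall>s>0. \<forall>t>0. F t \<le> \<sigma> * (P s + Q t) + K"
  proof (intro exI allI impI)
    fix s t :: real assume "s > 0" "t > 0"
    then have "0 \<le> \<sigma> * P s" using young_nonneg[OF assms(1), of s] sg by simp
    moreover have "F t \<le> \<sigma> * Q t + K" using K \<open>t > 0\<close> by blast
    ultimately show "F t \<le> \<sigma> * (P s + Q t) + K" by (simp add: distrib_left)
  qed
qed

lemma small_prod:
  assumes "young P" "young Q" "young G" "ll (young_conj Q) (P \<circ> young_inv G \<circ> young_conj G)"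
  shows "small P Q (\<lambda>s t. G s / s * t)"
  using prod_bound[OF assms] by (intro smallI) blast

lemma small_ratio:
  assumes "young P" "young Q" "young G" "ll (young_conj Q) (P \<circ> young_inv G \<circ> young_conj G)"
  shows "small P Q (\<lambda>s t. G s / s)"
proof (rule small_s_gen[OF assms(1,2)])
  fix \<sigma> :: real assume sg: "\<sigma> > 0"
  obtain K where K: "\<forall>s>0. \<forall>t>0. G s / s * t \<le> \<sigma> * (P s + Q t) + K" using prod_bound[OF assms sg] by blast
  show "\<exists>K. \<forall>s>0. G s / s \<le> \<sigma> * P s + K"
  proof (intro exI allI impI)
    fix s :: real assume "s > 0"
    then have "G s / s * 1 \<le> \<sigma> * (P s + Q 1) + K" using K[rule_format, of s 1] by simp
    then show "G s / s \<le> \<sigma> * P s + (\<sigma> * Q 1 + K)" by (simp add: distrib_left)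
  qed
qed

lemma powr_le_lin: fixes s p :: real shows "0 < s \<Longrightarrow> 0 \<le> p \<Longrightarrow> p \<le> 1 \<Longrightarrow> s powr p \<le> s + 1"
proof (cases "s \<le> 1")
  case True
  assume "0 < s" "0 \<le> p" "p \<le> 1"
  then have "s powr p \<le> s powr 0" using True powr_mono'[of 0 p s] by auto
  then show ?thesis using \<open>0 < s\<close> by simp
next
  case False
  assume "0 < s" "0 \<le> p" "p \<le> 1"
  then have "s powr p \<le> s powr 1" using False by (intro powr_mono) auto
  then show ?thesis using \<open>0 < s\<close> by simp
qed

lemma deriv_pw:
  fixes r p :: real
  assumes "0 < r" "p < 1"
  shows "((\<lambda>r. r powr (1 - p) / (1 - p)) has_real_derivative r powr (- p)) (at r)"
proof -
  have "((\<lambda>r. r powr (1 - p)) has_real_derivative (1 - p) * r powr (1 - p - 1)) (at r)"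
    by (rule has_real_derivative_powr[OF assms(1)])
  then have "((\<lambda>r. r powr (1 - p) / (1 - p)) has_real_derivative (1 - p) * r powr (1 - p - 1) / (1 - p)) (at r)"
    by (rule DERIV_cdivide)
  then show ?thesis using assms(2) by simp
qed

lemma deriv_G:
  fixes r p A0 a c :: real
  assumes "0 < r" "p < 1"
  shows "((\<lambda>r. A0 * ((r powr (1 - p) / (1 - p) + r) * a + r * c)) has_real_derivative
          A0 * ((r powr (- p) + 1) * a + c)) (at r)"
proof -
  have d: "((\<lambda>r. r powr (1 - p) / (1 - p) + r) has_real_derivative r powr (- p) + 1) (at r)"
    by (intro DERIV_add deriv_pw[OF assms] DERIV_ident)
  have d2: "((\<lambda>r. (r powr (1 - p) / (1 - p) + r) * a) has_real_derivative (r powr (- p) + 1) * a) (at r)"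
    by (rule DERIV_cmult_right[OF d])
  have d3: "((\<lambda>r. r * c) has_real_derivative 1 * c) (at r)"
    by (rule DERIV_cmult_right[OF DERIV_ident])
  have "((\<lambda>r. (r powr (1 - p) / (1 - p) + r) * a + r * c) has_real_derivative (r powr (- p) + 1) * a + 1 * c) (at r)"
    by (rule DERIV_add[OF d2 d3])
  then show ?thesis using DERIV_cmult by fastforce
qed

lemma pw_nonneg: "0 < (r::real) \<Longrightarrow> p < 1 \<Longrightarrow> 0 \<le> r powr (1 - p) / (1 - p) + r"
  by simp

lemma H_bound:
  fixes f g :: "real \<Rightarrow> real \<Rightarrow> real" and hx kx :: real and HH :: "real \<Rightarrow> real \<Rightarrow> real"
    and U1 U2 G1 G2 :: "real \<Rightarrow> real"
  assumes yU1: "young U1" and yU2: "young U2" and yG1: "young G1" and yG2: "young G2"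
    and C: "C > 0" and \<alpha>: "0 < \<alpha>" "\<alpha> < 1" and \<beta>: "0 < \<beta>" "\<beta> < 1"
    and hx: "hx > 0" and kx: "kx > 0"
    and f_pos: "\<forall>s>0. \<forall>t>0. f s t > 0"
    and g_pos: "\<forall>s>0. \<forall>t>0. g s t > 0"
    and H_ds: "\<forall>s>0. \<forall>t>0. ((\<lambda>s'. HH s' t) has_real_derivative hx * f s t) (at s)"
    and H_dt: "\<forall>s>0. \<forall>t>0. ((\<lambda>t'. HH s t') has_real_derivative kx * g s t) (at t)"
    and H_00: "((\<lambda>(s, t). HH s t) \<longlongrightarrow> 0) (at (0, 0) within ({0<..} \<times> {0<..}))"
    and f_bound: "\<forall>s>0. \<forall>t>0. f s t \<le>
        C * ((s powr (-\<alpha>) + 1) * (U2 t / t + 1) + U1 s / s)"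
    and g_bound: "\<forall>s>0. \<forall>t>0. g s t \<le>
        C * ((t powr (-\<beta>) + 1) * (G1 s / s + 1) + G2 t / t)"
    and s: "s > 0" and t: "t > 0"
  shows "0 \<le> HH s t \<and> HH s t \<le> hx * (C * ((s powr (1 - \<alpha>) / (1 - \<alpha>) + s) * 2 + U1 s))
            + kx * (C * ((t powr (1 - \<beta>) / (1 - \<beta>) + t) * (G1 s / s + 1) + G2 t))"
    (is "_ \<and> _ \<le> ?R")
proof -
  have lim: "((\<lambda>e. HH e e) \<longlongrightarrow> 0) (at_right 0)"
  proof -
    have ev: "eventually (\<lambda>e::real. (e, e) \<in> {0<..} \<times> {0<..} \<and> (e, e) \<noteq> (0, 0)) (at_right 0)"
      using eventually_at_right_less[of "0::real"] by eventually_elim auto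
    have tl: "((\<lambda>e::real. (e, e)) \<longlongrightarrow> (0, 0)) (at_right 0)"
      by (intro tendsto_Pair tendsto_ident_at)
    have fl: "filterlim (\<lambda>e::real. (e, e)) (at (0, 0) within {0<..} \<times> {0<..}) (at_right 0)"
      unfolding filterlim_at using ev tl by blast
    from filterlim_compose[OF H_00 fl] show ?thesis by simp
  qed
  have main: "- \<delta> < HH s t \<and> HH s t < ?R + \<delta>" if dp: "\<delta> > 0" for \<delta>
  proof -
    have e1: "eventually (\<lambda>e. dist (HH e e) 0 < \<delta>) (at_right 0)"
      using lim dp by (simp add: tendsto_iff)
    have "((\<lambda>t. U2 t / t) \<longlongrightarrow> 0) (at_right 0)" using yU2 unfolding young_def by blast
    then have e2: "eventually (\<lambda>e. U2 e / e < 1) (at_right 0)"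
      by (rule order_tendstoD(2)) simp
    have e3: "eventually (\<lambda>e. e < min s t) (at_right (0::real))"
      unfolding eventually_at_right_field using s t by (intro exI[of _ "min s t"]) auto
    have e4: "eventually (\<lambda>e. e > 0) (at_right (0::real))" by (rule eventually_at_right_less)
    have "eventually (\<lambda>e. dist (HH e e) 0 < \<delta> \<and> U2 e / e < 1 \<and> e < min s t \<and> e > 0) (at_right 0)"
      using e1 e2 e3 e4 by eventually_elim blast
    then have "\<exists>e. dist (HH e e) 0 < \<delta> \<and> U2 e / e < 1 \<and> e < min s t \<and> e > 0"
      by (rule eventually_happens'[OF trivial_limit_at_right_real])
    then obtain \<epsilon> where ep: "dist (HH \<epsilon> \<epsilon>) 0 < \<delta>" "U2 \<epsilon> / \<epsilon> < 1" "\<epsilon> < s" "\<epsilon> < t" "\<epsilon> > 0"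
      by auto
    define c1 where "c1 = U1 s / s"
    define A0 where "A0 = hx * C"
    have c1: "c1 \<ge> 0" unfolding c1_def using young_nonneg[OF yU1, of s] s by simp
    have A0: "A0 > 0" unfolding A0_def using hx C by simp
    have leg1: "HH s \<epsilon> - HH \<epsilon> \<epsilon> \<le> A0 * ((s powr (1 - \<alpha>) / (1 - \<alpha>) + s) * 2 + s * c1)
                 - A0 * ((\<epsilon> powr (1 - \<alpha>) / (1 - \<alpha>) + \<epsilon>) * 2 + \<epsilon> * c1)"
    proof (rule cmp_deriv[where F' = "\<lambda>r. hx * f r \<epsilon>" and G' = "\<lambda>r. A0 * ((r powr (- \<alpha>) + 1) * 2 + c1)"])
      show "\<epsilon> \<le> s" using ep by simp
    next
      fix r assume r: "\<epsilon> \<le> r" "r \<le> s"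
      then have r0: "r > 0" using ep by simp
      show "((\<lambda>r. HH r \<epsilon>) has_real_derivative hx * f r \<epsilon>) (at r)" using H_ds r0 ep by blast
      show "((\<lambda>r. A0 * ((r powr (1 - \<alpha>) / (1 - \<alpha>) + r) * 2 + r * c1)) has_real_derivative
             A0 * ((r powr (- \<alpha>) + 1) * 2 + c1)) (at r)"
        by (rule deriv_G[OF r0 \<alpha>(2)])
      have fb: "f r \<epsilon> \<le> C * ((r powr (-\<alpha>) + 1) * (U2 \<epsilon> / \<epsilon> + 1) + U1 r / r)" using f_bound r0 ep by blast
      have "(r powr (-\<alpha>) + 1) * (U2 \<epsilon> / \<epsilon> + 1) \<le> (r powr (-\<alpha>) + 1) * 2"
        using ep(2) by (intro mult_left_mono) auto
      moreover have "U1 r / r \<le> c1" unfolding c1_def by (rule young_ratio_mono[OF yU1 r0 r(2)])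
      ultimately have "(r powr (-\<alpha>) + 1) * (U2 \<epsilon> / \<epsilon> + 1) + U1 r / r \<le> (r powr (-\<alpha>) + 1) * 2 + c1"
        by linarith
      then have "C * ((r powr (-\<alpha>) + 1) * (U2 \<epsilon> / \<epsilon> + 1) + U1 r / r) \<le> C * ((r powr (-\<alpha>) + 1) * 2 + c1)"
        using C by (intro mult_left_mono) auto
      then have "f r \<epsilon> \<le> C * ((r powr (-\<alpha>) + 1) * 2 + c1)" using fb by linarith
      then show "hx * f r \<epsilon> \<le> A0 * ((r powr (- \<alpha>) + 1) * 2 + c1)"
        unfolding A0_def using hx by (simp add: mult.assoc mult_left_mono)
    qed
    have leg1': "0 \<le> HH s \<epsilon> - HH \<epsilon> \<epsilon>"
    proof -
      have "(\<lambda>_. 0::real) s - (\<lambda>_. 0::real) \<epsilon> \<le> HH s \<epsilon> - HH \<epsilon> \<epsilon>"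
      proof (rule cmp_deriv[where F = "\<lambda>_. 0" and G = "\<lambda>r. HH r \<epsilon>" and a = \<epsilon> and b = s and F' = "\<lambda>_. 0" and G' = "\<lambda>r. hx * f r \<epsilon>"])
        show "\<epsilon> \<le> s" using ep by simp
      next
        fix r assume r: "\<epsilon> \<le> r" "r \<le> s"
        then have r0: "r > 0" using ep by simp
        show "((\<lambda>r. HH r \<epsilon>) has_real_derivative hx * f r \<epsilon>) (at r)" using H_ds r0 ep by blast
        show "((\<lambda>_. 0::real) has_real_derivative 0) (at r)" by (rule DERIV_const)
        show "0 \<le> hx * f r \<epsilon>" using f_pos r0 ep hx by (simp add: less_imp_le)
      qed
      then show ?thesis by simp
    qed
    define c2 where "c2 = G2 t / t"
    define B0 where "B0 = kx * C"
    define a1 where "a1 = G1 s / s + 1"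
    have c2: "c2 \<ge> 0" unfolding c2_def using young_nonneg[OF yG2, of t] t by simp
    have B0: "B0 > 0" unfolding B0_def using kx C by simp
    have a1: "a1 \<ge> 0" unfolding a1_def using young_nonneg[OF yG1, of s] s by simp
    have leg2: "HH s t - HH s \<epsilon> \<le> B0 * ((t powr (1 - \<beta>) / (1 - \<beta>) + t) * a1 + t * c2)
                 - B0 * ((\<epsilon> powr (1 - \<beta>) / (1 - \<beta>) + \<epsilon>) * a1 + \<epsilon> * c2)"
    proof (rule cmp_deriv[where F' = "\<lambda>r. kx * g s r" and G' = "\<lambda>r. B0 * ((r powr (- \<beta>) + 1) * a1 + c2)"])
      show "\<epsilon> \<le> t" using ep by simp
    next
      fix r assume r: "\<epsilon> \<le> r" "r \<le> t"
      then have r0: "r > 0" using ep by simp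
      show "((\<lambda>r. HH s r) has_real_derivative kx * g s r) (at r)" using H_dt r0 s by blast
      show "((\<lambda>r. B0 * ((r powr (1 - \<beta>) / (1 - \<beta>) + r) * a1 + r * c2)) has_real_derivative
             B0 * ((r powr (- \<beta>) + 1) * a1 + c2)) (at r)"
        by (rule deriv_G[OF r0 \<beta>(2)])
      have gb: "g s r \<le> C * ((r powr (-\<beta>) + 1) * a1 + G2 r / r)" using g_bound r0 s unfolding a1_def by blast
      moreover have "G2 r / r \<le> c2" unfolding c2_def by (rule young_ratio_mono[OF yG2 r0 r(2)])
      then have "C * ((r powr (-\<beta>) + 1) * a1 + G2 r / r) \<le> C * ((r powr (-\<beta>) + 1) * a1 + c2)"
        using C by (intro mult_left_mono) auto
      then have "g s r \<le> C * ((r powr (-\<beta>) + 1) * a1 + c2)" using gb by linarith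
      then show "kx * g s r \<le> B0 * ((r powr (- \<beta>) + 1) * a1 + c2)"
        unfolding B0_def using kx by (simp add: mult.assoc mult_left_mono)
    qed
    have leg2': "0 \<le> HH s t - HH s \<epsilon>"
    proof -
      have "(\<lambda>_. 0::real) t - (\<lambda>_. 0::real) \<epsilon> \<le> HH s t - HH s \<epsilon>"
      proof (rule cmp_deriv[where F = "\<lambda>_. 0" and G = "\<lambda>r. HH s r" and a = \<epsilon> and b = t and F' = "\<lambda>_. 0" and G' = "\<lambda>r. kx * g s r"])
        show "\<epsilon> \<le> t" using ep by simp
      next
        fix r assume r: "\<epsilon> \<le> r" "r \<le> t"
        then have r0: "r > 0" using ep by simp
        show "((\<lambda>r. HH s r) has_real_derivative kx * g s r) (at r)" using H_dt r0 s by blast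
        show "((\<lambda>_. 0::real) has_real_derivative 0) (at r)" by (rule DERIV_const)
        show "0 \<le> kx * g s r" using g_pos r0 s kx by (simp add: less_imp_le)
      qed
      then show ?thesis by simp
    qed
    have g1e: "0 \<le> A0 * ((\<epsilon> powr (1 - \<alpha>) / (1 - \<alpha>) + \<epsilon>) * 2 + \<epsilon> * c1)"
      using A0 c1 ep(5) \<alpha>(2) pw_nonneg[OF ep(5) \<alpha>(2)] by simp
    have g2e: "0 \<le> B0 * ((\<epsilon> powr (1 - \<beta>) / (1 - \<beta>) + \<epsilon>) * a1 + \<epsilon> * c2)"
      using B0 c2 a1 ep(5) pw_nonneg[OF ep(5) \<beta>(2)] by simp
    have eqA: "A0 * ((s powr (1 - \<alpha>) / (1 - \<alpha>) + s) * 2 + s * c1) = hx * (C * ((s powr (1 - \<alpha>) / (1 - \<alpha>) + s) * 2 + U1 s))"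
      unfolding A0_def c1_def using s by simp
    have eqB: "B0 * ((t powr (1 - \<beta>) / (1 - \<beta>) + t) * a1 + t * c2) = kx * (C * ((t powr (1 - \<beta>) / (1 - \<beta>) + t) * (G1 s / s + 1) + G2 t))"
      unfolding B0_def c2_def a1_def using t by simp
    have "\<bar>HH \<epsilon> \<epsilon>\<bar> < \<delta>" using ep(1) by (simp add: dist_real_def)
    then show ?thesis using leg1 leg1' leg2 leg2' g1e g2e eqA eqB by linarith
  qed
  show ?thesis
  proof
    show "0 \<le> HH s t"
    proof (rule field_le_epsilon)
      fix e :: real assume "0 < e"
      then show "0 \<le> HH s t + e" using main[OF \<open>0 < e\<close>] by linarith
    qed
    show "HH s t \<le> ?R"
    proof (rule field_le_epsilon)
      fix e :: real assume "0 < e"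
      then show "HH s t \<le> ?R + e" using main[OF \<open>0 < e\<close>] by linarith
    qed
  qed
qed

lemma aux_eq1: "(d::real) \<noteq> 0 \<Longrightarrow> (s + 1) / d * 2 = 2 / d * s + 2 / d"
  by (simp add: field_simps)

lemma aux_eq2: "(d::real) \<noteq> 0 \<Longrightarrow> ((t + 1) / d + t) * (a + 1) = 1 / d * (a * t) + 1 / d * a
       + 1 / d * t + 1 / d + a * t + t"
  by (simp add: field_simps)

theorem lemma4p1:
  fixes \<Phi> \<Psi> \<phi> \<psi> :: "real \<Rightarrow> real"
    and f g :: "real \<Rightarrow> real \<Rightarrow> real"
    and h k :: "real ^ 'n \<Rightarrow> real"
    and H :: "real ^ 'n \<Rightarrow> real \<Rightarrow> real \<Rightarrow> real"
    and \<Upsilon>1 \<Upsilon>2 \<Gamma>1 \<Gamma>2 :: "real \<Rightarrow> real"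
    and C \<alpha> \<beta> :: real
  assumes dimN: "CARD('n) \<ge> 2"
    and young_Phi: "young \<Phi>" and young_Psi: "young \<Psi>"
    and phi_def: "\<forall>t>0. (\<Phi> has_real_derivative \<phi> t) (at t)"
    and psi_def: "\<forall>t>0. (\<Psi> has_real_derivative \<psi> t) (at t)"
    (* (H1) *)
    and C2_Phi: "C2_pos \<Phi> \<phi>" and C2_Psi: "C2_pos \<Psi> \<psi>"
    and idx_phi: "index_bounds \<phi>" and idx_psi: "index_bounds \<psi>"
    and bdd_Phi: "bdd_above ((\<lambda>t. t * deriv \<Phi> t / \<Phi> t) ` {0<..})"
    and bdd_Psi: "bdd_above ((\<lambda>t. t * deriv \<Psi> t / \<Psi> t) ` {0<..})"
    and sN: "max (s_index \<Phi>) (s_index \<Psi>) < real CARD('n)"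
    (* f, g, h, k *)
    and f_cont: "continuous_on ({0<..} \<times> {0<..}) (\<lambda>(s, t). f s t)"
    and g_cont: "continuous_on ({0<..} \<times> {0<..}) (\<lambda>(s, t). g s t)"
    and f_pos: "\<forall>s>0. \<forall>t>0. f s t > 0"
    and g_pos: "\<forall>s>0. \<forall>t>0. g s t > 0"
    and h_meas: "h \<in> borel_measurable lebesgue" and k_meas: "k \<in> borel_measurable lebesgue"
    and h_pos: "\<forall>x. h x > 0" and k_pos: "\<forall>x. k x > 0"
    (* (H2)(i) *)
    and H_meas: "\<forall>s>0. \<forall>t>0. (\<lambda>x. H x s t) \<in> borel_measurable lebesgue"
    and H_ds: "\<forall>x. \<forall>s>0. \<forall>t>0. ((\<lambda>s'. H x s' t) has_real_derivative h x * f s t) (at s)"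
    and H_dt: "\<forall>x. \<forall>s>0. \<forall>t>0. ((\<lambda>t'. H x s t') has_real_derivative k x * g s t) (at t)"
    and H_00: "\<forall>x. ((\<lambda>(s, t). H x s t) \<longlongrightarrow> 0) (at (0, 0) within ({0<..} \<times> {0<..}))"
    (* (H2)(ii) *)
    and young_U1: "young \<Upsilon>1" and young_U2: "young \<Upsilon>2"
    and young_G1: "young \<Gamma>1" and young_G2: "young \<Gamma>2"
    and diff_U1: "\<forall>t>0. \<Upsilon>1 differentiable (at t)"
    and diff_U2: "\<forall>t>0. \<Upsilon>2 differentiable (at t)"
    and diff_G1: "\<forall>t>0. \<Gamma>1 differentiable (at t)"
    and diff_G2: "\<forall>t>0. \<Gamma>2 differentiable (at t)"
    and U1_Phi: "ll \<Upsilon>1 \<Phi>" and G2_Psi: "ll \<Gamma>2 \<Psi>"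
    and C_pos: "C > 0" and \<alpha>: "0 < \<alpha>" "\<alpha> < 1" and \<beta>: "0 < \<beta>" "\<beta> < 1"
    and f_bound: "\<forall>s>0. \<forall>t>0. f s t \<le>
        C * ((s powr (-\<alpha>) + 1) * (\<Upsilon>2 t / t + 1) + \<Upsilon>1 s / s)"
    and g_bound: "\<forall>s>0. \<forall>t>0. g s t \<le>
        C * ((t powr (-\<beta>) + 1) * (\<Gamma>1 s / s + 1) + \<Gamma>2 t / t)"
    and conj_Phi: "ll (young_conj \<Phi>) (\<Psi> \<circ> young_inv \<Upsilon>2 \<circ> young_conj \<Upsilon>2)"
    and conj_Psi: "ll (young_conj \<Psi>) (\<Phi> \<circ> young_inv \<Gamma>1 \<circ> young_conj \<Gamma>1)"
  shows "\<forall>\<sigma>>0. \<exists>C\<sigma>>0. \<forall>x. \<forall>s>0. \<forall>t>0.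
           \<bar>H x s t\<bar> \<le> (h x + k x) * (\<sigma> * (\<Phi> s + \<Psi> t) + C\<sigma>)"
proof (intro allI impI)
  fix \<sigma> :: real assume sg: "\<sigma> > 0"
  define A where "A = (\<lambda>s::real. C * ((s powr (1 - \<alpha>) / (1 - \<alpha>) + s) * 2 + \<Upsilon>1 s))"
  define B where "B = (\<lambda>s t::real. C * ((t powr (1 - \<beta>) / (1 - \<beta>) + t) * (\<Gamma>1 s / s + 1) + \<Gamma>2 t))"
  have sm_s: "small \<Phi> \<Psi> (\<lambda>s t. s)"
    by (rule small_s_gen[OF young_Phi young_Psi]) (rule young_lin[OF young_Phi])
  have sm_t: "small \<Phi> \<Psi> (\<lambda>s t. t)"
    by (rule small_t_gen[OF young_Phi young_Psi]) (rule young_lin[OF young_Psi])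
  have sm_U1: "small \<Phi> \<Psi> (\<lambda>s t. \<Upsilon>1 s)"
    by (rule small_s_gen[OF young_Phi young_Psi]) (rule young_ll[OF young_U1 young_Phi U1_Phi])
  have sm_G2: "small \<Phi> \<Psi> (\<lambda>s t. \<Gamma>2 t)"
    by (rule small_t_gen[OF young_Phi young_Psi]) (rule young_ll[OF young_G2 young_Psi G2_Psi])
  have sm_pr: "small \<Phi> \<Psi> (\<lambda>s t. \<Gamma>1 s / s * t)"
    by (rule small_prod[OF young_Phi young_Psi young_G1 conj_Psi])
  have sm_ra: "small \<Phi> \<Psi> (\<lambda>s t. \<Gamma>1 s / s)"
    by (rule small_ratio[OF young_Phi young_Psi young_G1 conj_Psi])
  have sm_c: "small \<Phi> \<Psi> (\<lambda>s t. c)" for c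
    by (rule small_const[OF young_Phi young_Psi])
  have ca: "2 / (1 - \<alpha>) > 0" "(2::real) > 0" using \<alpha> by auto
  have cb: "1 / (1 - \<beta>) > 0" using \<beta> by auto
  have smY: "small \<Phi> \<Psi> (\<lambda>s t. 2 / (1 - \<alpha>) * s + 2 / (1 - \<alpha>) + 2 * s + \<Upsilon>1 s)"
    by (intro small_add small_cmult sm_s sm_c sm_U1 ca)
  have smY': "small \<Phi> \<Psi> (\<lambda>s t. C * (2 / (1 - \<alpha>) * s + 2 / (1 - \<alpha>) + 2 * s + \<Upsilon>1 s))"
    by (rule small_cmult[OF smY C_pos])
  have smA: "small \<Phi> \<Psi> (\<lambda>s t. A s)"
  proof (rule small_le[OF smY'])
    fix s t :: real assume s: "s > 0" and t: "t > 0"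
    have "s powr (1 - \<alpha>) \<le> s + 1" using powr_le_lin[OF s, of "1 - \<alpha>"] \<alpha> by simp
    then have "s powr (1 - \<alpha>) / (1 - \<alpha>) \<le> (s + 1) / (1 - \<alpha>)" using \<alpha> by (intro divide_right_mono) auto
    moreover have "(s + 1) / (1 - \<alpha>) * 2 = 2 / (1 - \<alpha>) * s + 2 / (1 - \<alpha>)" using \<alpha> aux_eq1[of "1 - \<alpha>" s] by simp
    moreover have "(s powr (1 - \<alpha>) / (1 - \<alpha>) + s) * 2 = s powr (1 - \<alpha>) / (1 - \<alpha>) * 2 + 2 * s" by simp
    ultimately have "(s powr (1 - \<alpha>) / (1 - \<alpha>) + s) * 2 + \<Upsilon>1 s \<le> 2 / (1 - \<alpha>) * s + 2 / (1 - \<alpha>) + 2 * s + \<Upsilon>1 s"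
      by linarith
    then show "A s \<le> C * (2 / (1 - \<alpha>) * s + 2 / (1 - \<alpha>) + 2 * s + \<Upsilon>1 s)"
      unfolding A_def using C_pos by (intro mult_left_mono) auto
  qed
  have smZ: "small \<Phi> \<Psi> (\<lambda>s t. 1 / (1 - \<beta>) * (\<Gamma>1 s / s * t) + 1 / (1 - \<beta>) * (\<Gamma>1 s / s)
       + 1 / (1 - \<beta>) * t + 1 / (1 - \<beta>) + \<Gamma>1 s / s * t + \<Gamma>1 s / s + t + 1 + \<Gamma>2 t)"
    by (intro small_add small_cmult sm_t sm_c sm_G2 sm_pr sm_ra cb)
  have smZ': "small \<Phi> \<Psi> (\<lambda>s t. C * (1 / (1 - \<beta>) * (\<Gamma>1 s / s * t) + 1 / (1 - \<beta>) * (\<Gamma>1 s / s)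
       + 1 / (1 - \<beta>) * t + 1 / (1 - \<beta>) + \<Gamma>1 s / s * t + \<Gamma>1 s / s + t + 1 + \<Gamma>2 t))"
    by (rule small_cmult[OF smZ C_pos])
  have smB: "small \<Phi> \<Psi> (\<lambda>s t. B s t)"
  proof (rule small_le[OF smZ'])
    fix s t :: real assume s: "s > 0" and t: "t > 0"
    define a where "a = \<Gamma>1 s / s"
    have a: "a \<ge> 0" unfolding a_def using young_nonneg[OF young_G1, of s] s by simp
    have "t powr (1 - \<beta>) \<le> t + 1" using powr_le_lin[OF t, of "1 - \<beta>"] \<beta> by simp
    then have "t powr (1 - \<beta>) / (1 - \<beta>) \<le> (t + 1) / (1 - \<beta>)" using \<beta> by (intro divide_right_mono) auto
    then have "(t powr (1 - \<beta>) / (1 - \<beta>) + t) * (a + 1) \<le> ((t + 1) / (1 - \<beta>) + t) * (a + 1)"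
      using a by (intro mult_right_mono) auto
    moreover have "((t + 1) / (1 - \<beta>) + t) * (a + 1) = 1 / (1 - \<beta>) * (a * t) + 1 / (1 - \<beta>) * a
       + 1 / (1 - \<beta>) * t + 1 / (1 - \<beta>) + a * t + t"
      using \<beta> aux_eq2[of "1 - \<beta>" t a] by simp
    ultimately have "(t powr (1 - \<beta>) / (1 - \<beta>) + t) * (a + 1) + \<Gamma>2 t \<le> 1 / (1 - \<beta>) * (a * t) + 1 / (1 - \<beta>) * a
       + 1 / (1 - \<beta>) * t + 1 / (1 - \<beta>) + a * t + a + t + 1 + \<Gamma>2 t"
      using a by linarith
    then show "B s t \<le> C * (1 / (1 - \<beta>) * (\<Gamma>1 s / s * t) + 1 / (1 - \<beta>) * (\<Gamma>1 s / s)
       + 1 / (1 - \<beta>) * t + 1 / (1 - \<beta>) + \<Gamma>1 s / s * t + \<Gamma>1 s / s + t + 1 + \<Gamma>2 t)"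
      unfolding B_def a_def[symmetric] using C_pos by (intro mult_left_mono) auto
  qed
  obtain KA where KA: "\<forall>s>0. \<forall>t>0. A s \<le> \<sigma> * (\<Phi> s + \<Psi> t) + KA" using smallD[OF smA sg] by blast
  obtain KB where KB: "\<forall>s>0. \<forall>t>0. B s t \<le> \<sigma> * (\<Phi> s + \<Psi> t) + KB" using smallD[OF smB sg] by blast
  define K where "K = max (max KA KB) 1"
  show "\<exists>C\<sigma>>0. \<forall>x. \<forall>s>0. \<forall>t>0. \<bar>H x s t\<bar> \<le> (h x + k x) * (\<sigma> * (\<Phi> s + \<Psi> t) + C\<sigma>)"
  proof (intro exI[of _ K] conjI allI impI)
    show "K > 0" unfolding K_def by simp
    fix x :: "real ^ 'n" and s t :: real assume s: "s > 0" and t: "t > 0"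
    have hb: "0 \<le> H x s t \<and> H x s t \<le> h x * A s + k x * B s t"
      unfolding A_def B_def
      by (rule H_bound[OF young_U1 young_U2 young_G1 young_G2 C_pos \<alpha> \<beta> h_pos[rule_format, of x]
            k_pos[rule_format, of x] f_pos g_pos spec[OF H_ds, of x] spec[OF H_dt, of x] spec[OF H_00, of x]
            f_bound g_bound s t])
    define Q where "Q = \<sigma> * (\<Phi> s + \<Psi> t) + K"
    have AQ: "A s \<le> Q" using KA s t unfolding Q_def K_def by fastforce
    have BQ: "B s t \<le> Q" using KB s t unfolding Q_def K_def by fastforce
    have "h x * A s \<le> h x * Q" using AQ h_pos by (intro mult_left_mono) (auto simp: less_imp_le)
    moreover have "k x * B s t \<le> k x * Q" using BQ k_pos by (intro mult_left_mono) (auto simp: less_imp_le)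
    ultimately have "H x s t \<le> (h x + k x) * Q" using hb by (simp add: distrib_right)
    then show "\<bar>H x s t\<bar> \<le> (h x + k x) * (\<sigma> * (\<Phi> s + \<Psi> t) + K)"
      using hb unfolding Q_def by simp
  qed
qed

end
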